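(* Let $n\ge1$, $k\ge2$ and $B,B'\in\mathrm{GL}_n(\mathbb{R})$. The actions $\rho_B$ and $\rho_{B'}$ are smoothly conjugate if and only if there exist $T\in O(n)$ and $c>0$ such that $B'=(cT)B$.
   Context: $\Gamma_{n,k} = \langle a, b_1,\dots,b_n \mid a b_i a^{-1} = b_i^k,\ b_i b_j = b_j b_i\rangle$. Elements of $\mathrm{GL}_n(\mathbb{R})$ are identified with bases $B=(v_1,\dots,v_n)$ of $\mathbb{R}^n$ (columns). Identify $S^n=\mathbb{R}^n\cup\{\infty\}$ by stereographic projection; $\rho_B$ is the smooth $\Gamma_{n,k}$-action on $S^n$ with $\rho_B^a(x)=kx$, $\rho_B^{b_i}(x)=x+v_i$ for $x\in\mathbb{R}^n$ and $\rho_B^a(\infty)=\rho_B^{b_i}(\infty)=\infty$. $O(n)$ is the orthogonal group. Smoothly conjugate means there is a diffeomorphism $h$ of $S^n$ with $\rho_{B'}^\gamma\circ h=h\circ\rho_B^\gamma$ for all $\gamma\in\Gamma_{n,k}$. *)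

theory Defs
  imports "HOL-Analysis.Analysis"
begin

fun iter_dd :: "'a::real_normed_vector list \<Rightarrow> ('a \<Rightarrow> 'b::real_normed_vector) \<Rightarrow> 'a \<Rightarrow> 'b" where
  "iter_dd [] f = f"
| "iter_dd (v # vs) f = (\<lambda>x. frechet_derivative (iter_dd vs f) (at x) v)"

definition smooth_on :: "'a::euclidean_space set \<Rightarrow> ('a \<Rightarrow> 'b::real_normed_vector) \<Rightarrow> bool" where
  "smooth_on S f \<longleftrightarrow> open S \<and> (\<forall>vs. set vs \<subseteq> Basis \<longrightarrow> iter_dd vs f differentiable_on S)"

text \<open>Points of S^n: Some x for x in R^n, None for the point at infinity.
  Two charts (stereographic projections from the two poles):
  chart 0 = the identity on R^n, chart 1 sends Some x (x \<noteq> 0) to x/|x|^2 and infinity to 0.\<close>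
type_synonym 'n sphere_pt = "(real^'n) option"

definition chart_dom :: "bool \<Rightarrow> 'n::finite sphere_pt set" where
  "chart_dom i = (if i then {p. p \<noteq> Some 0} else {p. p \<noteq> None})"

definition chart :: "bool \<Rightarrow> 'n::finite sphere_pt \<Rightarrow> real^'n" where
  "chart i p = (if i then (case p of None \<Rightarrow> 0 | Some x \<Rightarrow> inverse ((norm x)\<^sup>2) *\<^sub>R x)
                else (case p of None \<Rightarrow> 0 | Some x \<Rightarrow> x))"

definition chart_inv :: "bool \<Rightarrow> real^'n::finite \<Rightarrow> 'n sphere_pt" where
  "chart_inv i y = (if i then (if y = 0 then None else Some (inverse ((norm y)\<^sup>2) *\<^sub>R y))
                    else Some y)"

definition smooth_sphere_map :: "('n::finite sphere_pt \<Rightarrow> 'n sphere_pt) \<Rightarrow> bool" where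
  "smooth_sphere_map h \<longleftrightarrow>
     (\<forall>i j. smooth_on (chart i ` (chart_dom i \<inter> h -` chart_dom j))
                      (chart j \<circ> h \<circ> chart_inv i))"

definition sphere_diffeo :: "('n::finite sphere_pt \<Rightarrow> 'n sphere_pt) \<Rightarrow> bool" where
  "sphere_diffeo h \<longleftrightarrow> bij h \<and> smooth_sphere_map h \<and> smooth_sphere_map (inv h)"

text \<open>B is an n x n matrix whose columns v_i = column i B form the basis.\<close>
definition rho_a :: "int \<Rightarrow> 'n::finite sphere_pt \<Rightarrow> 'n sphere_pt" where
  "rho_a k p = map_option (\<lambda>x. of_int k *\<^sub>R x) p"

definition rho_b :: "real^'n^'n \<Rightarrow> 'n::finite \<Rightarrow> 'n sphere_pt \<Rightarrow> 'n sphere_pt" where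
  "rho_b B i p = map_option (\<lambda>x. x + column i B) p"

text \<open>Smooth conjugacy: h conjugates every generator, hence every element of Gamma_{n,k}.\<close>
definition smoothly_conjugate :: "int \<Rightarrow> real^'n^'n \<Rightarrow> real^'n^'n \<Rightarrow> bool" where
  "smoothly_conjugate k B B' \<longleftrightarrow>
     (\<exists>h::'n::finite sphere_pt \<Rightarrow> 'n sphere_pt. sphere_diffeo h \<and>
        rho_a k \<circ> h = h \<circ> rho_a k \<and>
        (\<forall>i. rho_b B' i \<circ> h = h \<circ> rho_b B i))"

end

theory Submission
  imports Defs
begin


inductive gS :: "bool \<Rightarrow> (real^'n::finite \<Rightarrow> real) \<Rightarrow> bool" for b where
  gS_const: "gS b (\<lambda>x. c)"
| gS_coord: "gS b (\<lambda>x. x $ j)"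
| gS_inv: "b \<Longrightarrow> gS b (\<lambda>x. inverse (x \<bullet> x))"
| gS_add: "gS b f \<Longrightarrow> gS b g \<Longrightarrow> gS b (\<lambda>x. f x + g x)"
| gS_mult: "gS b f \<Longrightarrow> gS b g \<Longrightarrow> gS b (\<lambda>x. f x * g x)"

lemma gS_sum: "finite S \<Longrightarrow> (\<And>i. i \<in> S \<Longrightarrow> gS b (f i)) \<Longrightarrow> gS b (\<lambda>x. \<Sum>i\<in>S. f i x)"
  by (induction S rule: finite_induct) (auto intro: gS_add gS_const)

lemma gS_inner: "gS b (\<lambda>x. x \<bullet> v)"
proof -
  have "gS b (\<lambda>x. \<Sum>j\<in>UNIV. x $ j * v $ j)"
    by (intro gS_sum gS_mult gS_coord gS_const) auto
  then show ?thesis by (simp add: inner_vec_def)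
qed

lemma gS_deriv: fixes f :: "real^'n::finite \<Rightarrow> real" shows "gS b f \<Longrightarrow> \<exists>D. (\<forall>x. (b \<longrightarrow> x \<noteq> 0) \<longrightarrow> (f has_derivative D x) (at x))
   \<and> (\<forall>v. gS b (\<lambda>x. D x v))"
proof (induction rule: gS.induct)
  case (gS_const c)
  show ?case by (rule exI[of _ "\<lambda>x h. 0"]) (auto intro: gS.gS_const)
next
  case (gS_coord j)
  show ?case
    by (rule exI[of _ "\<lambda>x h. h $ j"]) (auto intro: gS.gS_const bounded_linear.has_derivative[OF bounded_linear_vec_nth] has_derivative_ident)
next
  case gS_inv
  show ?case
  proof (rule exI[of _ "\<lambda>x h. - (inverse (x \<bullet> x) * (x \<bullet> h + h \<bullet> x) * inverse (x \<bullet> x))"], intro conjI allI impI)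
    fix x :: "real^'n" assume "b \<longrightarrow> x \<noteq> 0"
    with gS_inv have "x \<bullet> x \<noteq> 0" by simp
    then show "((\<lambda>x. inverse (x \<bullet> x)) has_derivative (\<lambda>h. - (inverse (x \<bullet> x) * (x \<bullet> h + h \<bullet> x) * inverse (x \<bullet> x)))) (at x)"
      by (rule Deriv.has_derivative_inverse[OF _ has_derivative_inner[OF has_derivative_ident has_derivative_ident]])
  next
    fix v
    have "gS b (\<lambda>x. (-1) * ((inverse (x \<bullet> x) * (x \<bullet> v + x \<bullet> v) * inverse (x \<bullet> x))))"
      using gS_inv by (intro gS.gS_mult gS.gS_const gS.gS_add gS_inner gS.gS_inv)
    then show "gS b (\<lambda>x. - (inverse (x \<bullet> x) * (x \<bullet> v + v \<bullet> x) * inverse (x \<bullet> x)))"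
      by (simp add: inner_commute)
  qed
next
  case (gS_add f g)
  then obtain Df Dg where f: "\<forall>x. (b \<longrightarrow> x \<noteq> 0) \<longrightarrow> (f has_derivative Df x) (at x)" "\<forall>v. gS b (\<lambda>x. Df x v)"
    and g: "\<forall>x. (b \<longrightarrow> x \<noteq> 0) \<longrightarrow> (g has_derivative Dg x) (at x)" "\<forall>v. gS b (\<lambda>x. Dg x v)" by blast
  show ?case
    by (rule exI[of _ "\<lambda>x h. Df x h + Dg x h"]) (use f g in \<open>auto intro: gS.gS_add has_derivative_add\<close>)
next
  case (gS_mult f g)
  then obtain Df Dg where f: "\<forall>x. (b \<longrightarrow> x \<noteq> 0) \<longrightarrow> (f has_derivative Df x) (at x)" "\<forall>v. gS b (\<lambda>x. Df x v)"
    and g: "\<forall>x. (b \<longrightarrow> x \<noteq> 0) \<longrightarrow> (g has_derivative Dg x) (at x)" "\<forall>v. gS b (\<lambda>x. Dg x v)" by blast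
  show ?case
  proof (rule exI[of _ "\<lambda>x h. f x * Dg x h + Df x h * g x"], intro conjI allI impI)
    fix x :: "real^'n" assume "b \<longrightarrow> x \<noteq> 0"
    then show "((\<lambda>x. f x * g x) has_derivative (\<lambda>h. f x * Dg x h + Df x h * g x)) (at x)"
      using f g by (intro has_derivative_mult) auto
  next
    fix v
    show "gS b (\<lambda>x. f x * Dg x v + Df x v * g x)"
      using f g gS_mult.hyps by (intro gS.gS_add gS.gS_mult) auto
  qed
qed

definition gV :: "bool \<Rightarrow> (real^'n::finite \<Rightarrow> real^'n) \<Rightarrow> bool" where
  "gV b f \<longleftrightarrow> (\<forall>j. gS b (\<lambda>x. f x $ j))"

lemma has_derivative_vecI:
  fixes f :: "real^'n::finite \<Rightarrow> real^'n"
  assumes "\<And>j. ((\<lambda>x. f x $ j) has_derivative D j) (at x)"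
  shows "(f has_derivative (\<lambda>h. \<chi> j. D j h)) (at x)"
proof (rule has_derivative_componentwise_within[THEN iffD2], intro ballI)
  fix i :: "real^'n" assume "i \<in> Basis"
  then obtain j where i: "i = axis j 1" by (auto simp: Basis_vec_def)
  have e1: "(\<lambda>x. f x \<bullet> i) = (\<lambda>x. f x $ j)" by (simp add: i inner_axis)
  have e2: "(\<lambda>h. (\<chi> j. D j h) \<bullet> i) = D j" by (simp add: i inner_axis)
  show "((\<lambda>x. f x \<bullet> i) has_derivative (\<lambda>h. (\<chi> j. D j h) \<bullet> i)) (at x)"
    unfolding e1 e2 by (rule assms)
qed

lemma gV_deriv: fixes f :: "real^'n::finite \<Rightarrow> real^'n" assumes "gV b f"
  shows "\<exists>D. (\<forall>x. (b \<longrightarrow> x \<noteq> 0) \<longrightarrow> (f has_derivative D x) (at x)) \<and> (\<forall>v. gV b (\<lambda>x. D x v))"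
proof -
  have "\<forall>j. \<exists>D. (\<forall>x. (b \<longrightarrow> x \<noteq> 0) \<longrightarrow> ((\<lambda>x. f x $ j) has_derivative D x) (at x)) \<and> (\<forall>v. gS b (\<lambda>x. D x v))"
  proof
    fix j
    show "\<exists>D. (\<forall>x. (b \<longrightarrow> x \<noteq> 0) \<longrightarrow> ((\<lambda>x. f x $ j) has_derivative D x) (at x)) \<and> (\<forall>v. gS b (\<lambda>x. D x v))"
      by (rule gS_deriv) (use assms in \<open>simp add: gV_def\<close>)
  qed
  from choice[OF this] obtain DD where DD0: "\<forall>j. (\<forall>x. (b \<longrightarrow> x \<noteq> 0) \<longrightarrow> ((\<lambda>x. f x $ j) has_derivative DD j x) (at x)) \<and> (\<forall>v. gS b (\<lambda>x. DD j x v))"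
    by (elim exE)
  have DD: "\<And>j x. (b \<longrightarrow> x \<noteq> 0) \<Longrightarrow> ((\<lambda>x. f x $ j) has_derivative DD j x) (at x)"
    "\<And>j v. gS b (\<lambda>x. DD j x v)" using DD0 by auto
  show ?thesis
  proof (rule exI[of _ "\<lambda>x h. \<chi> j. DD j x h"], intro conjI allI impI)
    fix x :: "real^'n" assume "b \<longrightarrow> x \<noteq> 0"
    then show "(f has_derivative (\<lambda>h. \<chi> j. DD j x h)) (at x)"
      by (intro has_derivative_vecI DD)
  next
    fix v
    show "gV b (\<lambda>x. \<chi> j. DD j x v)" using DD(2) by (simp add: gV_def)
  qed
qed

definition good_on :: "bool \<Rightarrow> (real^'n::finite) set \<Rightarrow> (real^'n \<Rightarrow> real^'n) \<Rightarrow> bool" where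
  "good_on b U f \<longleftrightarrow> (\<exists>g. gV b g \<and> (\<forall>x\<in>U. f x = g x))"

lemma diff_on_of: "(\<And>x. x\<in>U \<Longrightarrow> (F has_derivative D x) (at x)) \<Longrightarrow> F differentiable_on U"
  unfolding differentiable_on_def differentiable_def by (blast intro: has_derivative_at_withinI)

lemma iter_good:
  assumes U: "open U" "b \<Longrightarrow> 0 \<notin> U" and f: "good_on b U f"
  shows "good_on b U (iter_dd vs f) \<and> iter_dd vs f differentiable_on U"
proof (induction vs)
  have *: "good_on b U F \<Longrightarrow> \<exists>D. (\<forall>x\<in>U. (F has_derivative D x) (at x)) \<and> (\<forall>v. gV b (\<lambda>x. D x v))" for F
  proof -
    assume "good_on b U F"
    then obtain g where g: "gV b g" "\<And>x. x\<in>U \<Longrightarrow> F x = g x" unfolding good_on_def by blast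
    from gV_deriv[OF g(1)] obtain D where D: "\<And>x. (b \<longrightarrow> x \<noteq> 0) \<Longrightarrow> (g has_derivative D x) (at x)"
      "\<And>v. gV b (\<lambda>x. D x v)" by blast
    have "(F has_derivative D x) (at x)" if "x \<in> U" for x
      by (rule has_derivative_transform_within_open[OF D(1) U(1) that]) (use U that g in auto)
    with D show ?thesis by blast
  qed
  {
    case Nil
    from *[OF f] obtain D where "\<And>x. x\<in>U \<Longrightarrow> (f has_derivative D x) (at x)" by blast
    then have "f differentiable_on U" by (rule diff_on_of)
    then show ?case using f by simp
  next
    case (Cons v vs)
    from *[OF Cons[THEN conjunct1]] obtain D where D: "\<And>x. x\<in>U \<Longrightarrow> (iter_dd vs f has_derivative D x) (at x)"
      "\<And>v. gV b (\<lambda>x. D x v)" by blast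
    have eq: "\<And>x. x\<in>U \<Longrightarrow> iter_dd (v # vs) f x = D x v"
      using D(1) frechet_derivative_at by fastforce
    have g: "good_on b U (iter_dd (v # vs) f)"
      unfolding good_on_def using D(2)[of v] eq by blast
    from *[OF g] obtain D' where "\<And>x. x\<in>U \<Longrightarrow> (iter_dd (v # vs) f has_derivative D' x) (at x)" by blast
    then have "iter_dd (v # vs) f differentiable_on U" by (rule diff_on_of)
    then show ?case using g by blast
  }
qed

lemma good_smooth:
  assumes U: "open U" "b \<Longrightarrow> 0 \<notin> U" and f: "good_on b U f"
  shows "smooth_on U f"
  unfolding smooth_on_def using iter_good[OF U f] U(1) by blast



lemma gV_lin: "gV b (\<lambda>x. M *v x)"
  unfolding gV_def
proof
  fix j
  have "gS b (\<lambda>x. \<Sum>i\<in>UNIV. M$j$i * x$i)"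
    by (intro gS_sum gS_mult gS_coord gS_const) auto
  then show "gS b (\<lambda>x. (M *v x) $ j)" by (simp add: matrix_vector_mult_def)
qed

lemma gV_scale: "gS b s \<Longrightarrow> gV b F \<Longrightarrow> gV b (\<lambda>x. s x *\<^sub>R F x)"
  unfolding gV_def by (auto intro: gS.gS_mult)

lemma norm_orth: fixes T :: "real^'n::finite^'n" shows "orthogonal_matrix T \<Longrightarrow> norm (T *v x) = norm x"
proof -
  assume "orthogonal_matrix T"
  then have "orthogonal_transformation (\<lambda>x. T *v x)" by (simp add: orthogonal_transformation_matrix)
  then show ?thesis by (rule orthogonal_transformation_norm)
qed

lemma normA: fixes T :: "real^'n::finite^'n" shows "orthogonal_matrix T \<Longrightarrow> c > 0 \<Longrightarrow> norm ((c *\<^sub>R T) *v x) = c * norm x"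
  using norm_orth[of T x] by (simp add: scaleR_matrix_vector_assoc[symmetric])

lemma inv_inv: "y \<noteq> 0 \<Longrightarrow> inverse (norm (inverse (norm y ^2) *\<^sub>R y) ^2) *\<^sub>R (inverse (norm y ^2) *\<^sub>R y) = (y::'a::real_normed_vector)"
proof -
  assume y: "y \<noteq> 0"
  have "norm (inverse (norm y ^2) *\<^sub>R y) = inverse (norm y)" using y by (simp add: power2_eq_square)
  then show ?thesis using y by (simp add: power2_eq_square field_simps)
qed

lemma inv_nz: "y \<noteq> 0 \<Longrightarrow> inverse (norm y ^2) *\<^sub>R y \<noteq> (0::'a::real_normed_vector)"
  by simp

lemma open_nz: "open {x::'a::real_normed_vector. x \<noteq> 0}"
proof -
  have "{x::'a. x \<noteq> 0} = - {0}" by auto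
  then show ?thesis by (simp add: open_Compl)
qed

lemma smooth_lin:
  fixes T :: "real^'n::finite^'n"
  assumes T: "orthogonal_matrix T" and c: "c > 0"
  shows "smooth_sphere_map (map_option (\<lambda>x. (c *\<^sub>R T) *v x))"
proof -
  define A where "A = c *\<^sub>R T"
  define h where "h = map_option (\<lambda>x. A *v x)"
  have nA: "norm (A *v x) = c * norm x" for x unfolding A_def using normA[OF T c] .
  have A0: "A *v x = 0 \<longleftrightarrow> x = 0" for x using nA[of x] c by (metis mult_eq_0_iff norm_eq_zero order_less_irrefl)
  have sq: "inverse (norm (A *v x) ^ 2) = inverse (c^2) * inverse (x \<bullet> x)" for x
    by (simp add: nA power_mult_distrib power2_norm_eq_inner)
  have c00: "smooth_on (chart False ` (chart_dom False \<inter> h -` chart_dom False)) (chart False \<circ> h \<circ> chart_inv False)"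
  proof -
    have dom: "chart False ` (chart_dom False \<inter> h -` chart_dom False) = UNIV"
    proof -
      have "x \<in> chart False ` (chart_dom False \<inter> h -` chart_dom False)" for x
        by (rule image_eqI[of _ _ "Some x"]) (use A0 in \<open>auto simp: chart_def chart_dom_def h_def\<close>)
      then show ?thesis by blast
    qed
    have "good_on False UNIV (chart False \<circ> h \<circ> chart_inv False)"
      unfolding good_on_def
      by (rule exI[of _ "\<lambda>x. A *v x"]) (use A0 in \<open>simp add: gV_lin chart_def chart_inv_def h_def\<close>)
    then show ?thesis unfolding dom by (intro good_smooth) auto
  qed
  have c01: "smooth_on (chart False ` (chart_dom False \<inter> h -` chart_dom True)) (chart True \<circ> h \<circ> chart_inv False)"
  proof -
    have dom: "chart False ` (chart_dom False \<inter> h -` chart_dom True) = {x. x \<noteq> 0}"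
    proof -
      have "x \<in> chart False ` (chart_dom False \<inter> h -` chart_dom True)" if "x \<noteq> 0" for x
        by (rule image_eqI[of _ _ "Some x"]) (use that A0 in \<open>auto simp: chart_def chart_dom_def h_def\<close>)
      moreover have "chart False ` (chart_dom False \<inter> h -` chart_dom True) \<subseteq> {x. x \<noteq> 0}"
      proof
        fix y assume "y \<in> chart False ` (chart_dom False \<inter> h -` chart_dom True)"
        then obtain p where p: "p \<in> chart_dom False" "h p \<in> chart_dom True" "y = chart False p" by blast
        then obtain x where x: "p = Some x" "x \<noteq> 0" by (cases p) (auto simp: chart_dom_def h_def A0)
        show "y \<in> {x. x \<noteq> 0}" using p(3) x by (simp add: chart_def)
      qed
      ultimately show ?thesis by blast
    qed
    have "good_on True {x. x \<noteq> 0} (chart True \<circ> h \<circ> chart_inv False)"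
      unfolding good_on_def
    proof (rule exI[of _ "\<lambda>x. (inverse (c^2) * inverse (x \<bullet> x)) *\<^sub>R (A *v x)"], intro conjI ballI)
      show "gV True (\<lambda>x. (inverse (c^2) * inverse (x \<bullet> x)) *\<^sub>R (A *v x))"
        by (intro gV_scale gV_lin gS.gS_mult gS.gS_const gS.gS_inv) simp
      fix x :: "real^'n" assume "x \<in> {x. x \<noteq> 0}"
      then show "(chart True \<circ> h \<circ> chart_inv False) x = (inverse (c^2) * inverse (x \<bullet> x)) *\<^sub>R (A *v x)"
        by (simp add: chart_def chart_inv_def h_def sq)
    qed
    then show ?thesis unfolding dom by (intro good_smooth open_nz) auto
  qed
  have c10: "smooth_on (chart True ` (chart_dom True \<inter> h -` chart_dom False)) (chart False \<circ> h \<circ> chart_inv True)"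
  proof -
    have dom: "chart True ` (chart_dom True \<inter> h -` chart_dom False) = {x. x \<noteq> 0}"
    proof -
      have "x \<in> chart True ` (chart_dom True \<inter> h -` chart_dom False)" if "x \<noteq> 0" for x
      proof (rule image_eqI[of _ _ "Some (inverse (norm x ^2) *\<^sub>R x)"])
        show "x = chart True (Some (inverse (norm x ^2) *\<^sub>R x))"
          using inv_inv[OF that] by (simp add: chart_def)
      qed (simp_all add: chart_dom_def h_def that A0)
      moreover have "chart True ` (chart_dom True \<inter> h -` chart_dom False) \<subseteq> {x. x \<noteq> 0}"
      proof
        fix y assume "y \<in> chart True ` (chart_dom True \<inter> h -` chart_dom False)"
        then obtain p where p: "p \<in> chart_dom True" "h p \<in> chart_dom False" "y = chart True p" by blast
        then obtain x where x: "p = Some x" "x \<noteq> 0" by (cases p) (auto simp: chart_dom_def h_def A0)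
        show "y \<in> {x. x \<noteq> 0}" using p(3) x by (simp add: chart_def)
      qed
      ultimately show ?thesis by blast
    qed
    have "good_on True {x. x \<noteq> 0} (chart False \<circ> h \<circ> chart_inv True)"
      unfolding good_on_def
    proof (rule exI[of _ "\<lambda>x. inverse (x \<bullet> x) *\<^sub>R (A *v x)"], intro conjI ballI)
      show "gV True (\<lambda>x. inverse (x \<bullet> x) *\<^sub>R (A *v x))"
        by (intro gV_scale gV_lin gS.gS_inv) simp
      fix x :: "real^'n" assume "x \<in> {x. x \<noteq> 0}"
      then show "(chart False \<circ> h \<circ> chart_inv True) x = inverse (x \<bullet> x) *\<^sub>R (A *v x)"
        by (simp add: chart_def chart_inv_def h_def matrix_vector_mult_scaleR power2_norm_eq_inner)
    qed
    then show ?thesis unfolding dom by (intro good_smooth open_nz) auto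
  qed
  have c11: "smooth_on (chart True ` (chart_dom True \<inter> h -` chart_dom True)) (chart True \<circ> h \<circ> chart_inv True)"
  proof -
    have dom: "chart True ` (chart_dom True \<inter> h -` chart_dom True) = UNIV"
    proof -
      have "x \<in> chart True ` (chart_dom True \<inter> h -` chart_dom True)" if "x \<noteq> 0" for x
      proof (rule image_eqI[of _ _ "Some (inverse (norm x ^2) *\<^sub>R x)"])
        show "x = chart True (Some (inverse (norm x ^2) *\<^sub>R x))"
          using inv_inv[OF that] by (simp add: chart_def)
      next
        have w: "inverse (norm x ^2) *\<^sub>R x \<noteq> 0" using that by simp
        have "A *v (inverse (norm x ^2) *\<^sub>R x) \<noteq> 0" using w A0 by blast
        then show "Some (inverse (norm x ^2) *\<^sub>R x) \<in> chart_dom True \<inter> h -` chart_dom True"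
          using w by (simp add: chart_dom_def h_def del: scaleR_eq_0_iff)
      qed
      moreover have "0 \<in> chart True ` (chart_dom True \<inter> h -` chart_dom True)"
        by (rule image_eqI[of _ _ None]) (use A0 in \<open>auto simp: chart_def chart_dom_def h_def\<close>)
      ultimately show ?thesis by (metis UNIV_eq_I)
    qed
    have "good_on False UNIV (chart True \<circ> h \<circ> chart_inv True)"
      unfolding good_on_def
    proof (rule exI[of _ "\<lambda>x. inverse (c^2) *\<^sub>R (A *v x)"], intro conjI ballI)
      show "gV False (\<lambda>x. inverse (c^2) *\<^sub>R (A *v x))"
        by (intro gV_scale gV_lin gS.gS_const)
      fix x :: "real^'n"
      show "(chart True \<circ> h \<circ> chart_inv True) x = inverse (c^2) *\<^sub>R (A *v x)"
      proof (cases "x = 0")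
        case True then show ?thesis by (simp add: chart_def chart_inv_def h_def)
      next
        case False
        let ?w = "inverse (norm x ^2) *\<^sub>R x"
        have "(chart True \<circ> h \<circ> chart_inv True) x = inverse (norm (A *v ?w) ^ 2) *\<^sub>R (A *v ?w)"
          using False by (simp add: chart_def chart_inv_def h_def)
        also have "\<dots> = (inverse (c^2) * inverse (?w \<bullet> ?w) * inverse (norm x ^2)) *\<^sub>R (A *v x)"
          by (simp only: sq) (simp add: matrix_vector_mult_scaleR)
        also have "inverse (c^2) * inverse (?w \<bullet> ?w) * inverse (norm x ^2) = inverse (c^2)"
          using False by (simp add: power2_norm_eq_inner[symmetric] power2_eq_square field_simps)
        finally show ?thesis .
      qed
    qed
    then show ?thesis unfolding dom by (intro good_smooth) auto
  qed
  have "smooth_on (chart i ` (chart_dom i \<inter> h -` chart_dom j)) (chart j \<circ> h \<circ> chart_inv i)" for i j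
    using c00 c01 c10 c11 by (cases i; cases j) auto
  then show ?thesis unfolding smooth_sphere_map_def h_def A_def by blast
qed



lemma pow_scale:
  fixes \<phi> :: "real^'n::finite \<Rightarrow> real^'n"
  assumes sc: "\<And>x. \<phi> (K *\<^sub>R x) = K *\<^sub>R \<phi> x"
  shows "\<phi> ((K^m) *\<^sub>R x) = (K^m) *\<^sub>R \<phi> x"
proof (induction m)
  case 0 then show ?case by simp
next
  case (Suc m)
  have "\<phi> ((K^Suc m) *\<^sub>R x) = \<phi> (K *\<^sub>R ((K^m) *\<^sub>R x))" by simp
  also have "\<dots> = K *\<^sub>R \<phi> ((K^m) *\<^sub>R x)" by (rule sc)
  also have "\<dots> = (K^Suc m) *\<^sub>R \<phi> x" using Suc by simp
  finally show ?case .
qed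

lemma frac_shift:
  fixes \<phi> :: "real^'n::finite \<Rightarrow> real^'n"
  assumes K: "K > 0" and sc: "\<And>x. \<phi> (K *\<^sub>R x) = K *\<^sub>R \<phi> x"
    and tr: "\<And>x. \<phi> (x + v) = \<phi> x + v'"
  shows "\<phi> (x + inverse (K^m) *\<^sub>R v) = \<phi> x + inverse (K^m) *\<^sub>R v'"
proof -
  have Km: "K^m > 0" using K by simp
  have Kn[simp]: "K^m \<noteq> 0" using K by simp
  have "(K^m) *\<^sub>R \<phi> (x + inverse (K^m) *\<^sub>R v) = \<phi> ((K^m) *\<^sub>R (x + inverse (K^m) *\<^sub>R v))"
    by (rule pow_scale[of \<phi> K, OF sc, symmetric])
  also have "(K^m) *\<^sub>R (x + inverse (K^m) *\<^sub>R v) = (K^m) *\<^sub>R x + v"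
    using K by (simp add: scaleR_add_right)
  also have "\<phi> \<dots> = \<phi> ((K^m) *\<^sub>R x) + v'" by (rule tr)
  also have "\<dots> = (K^m) *\<^sub>R (\<phi> x + inverse (K^m) *\<^sub>R v')"
    using K by (simp add: pow_scale[of \<phi> K, OF sc] scaleR_add_right)
  finally show ?thesis using K by simp
qed

lemma int_shift:
  fixes \<psi> :: "real^'n::finite \<Rightarrow> real^'n"
  assumes tr: "\<And>x. \<psi> (x + u) = \<psi> x + u'"
  shows "\<psi> (x + of_int z *\<^sub>R u) = \<psi> x + of_int z *\<^sub>R u'"
proof -
  have pos: "\<psi> (y + of_nat n *\<^sub>R u) = \<psi> y + of_nat n *\<^sub>R u'" for y n
  proof (induction n)
    case 0 then show ?case by simp
  next
    case (Suc n)
    have "\<psi> (y + of_nat (Suc n) *\<^sub>R u) = \<psi> ((y + of_nat n *\<^sub>R u) + u)"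
      by (simp add: algebra_simps)
    also have "\<dots> = \<psi> y + of_nat n *\<^sub>R u' + u'" using tr Suc by simp
    finally show ?case by (simp add: algebra_simps)
  qed
  show ?thesis
  proof (cases "z \<ge> 0")
    case True
    define n where "n = nat z"
    have "z = int n" using True by (simp add: n_def)
    then show ?thesis using pos by simp
  next
    case False
    define n where "n = nat (- z)"
    have n: "z = - int n" using False by (simp add: n_def)
    have "\<psi> x = \<psi> ((x - of_nat n *\<^sub>R u) + of_nat n *\<^sub>R u)" by simp
    also have "\<dots> = \<psi> (x - of_nat n *\<^sub>R u) + of_nat n *\<^sub>R u'" by (rule pos)
    finally show ?thesis using n by (simp add: algebra_simps)
  qed
qed

lemma real_shift:
  fixes \<phi> :: "real^'n::finite \<Rightarrow> real^'n"
  assumes K: "K > 1" and sc: "\<And>x. \<phi> (K *\<^sub>R x) = K *\<^sub>R \<phi> x"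
    and tr: "\<And>x. \<phi> (x + v) = \<phi> x + v'" and cont: "continuous_on UNIV \<phi>"
  shows "\<phi> (x + t *\<^sub>R v) = \<phi> x + t *\<^sub>R v'"
proof -
  have K0: "K^m \<noteq> 0" for m using K by simp
  define tm where "tm m = of_int \<lfloor>K^m * t\<rfloor> * inverse (K^m)" for m :: nat
  have eq: "\<phi> (x + tm m *\<^sub>R v) = \<phi> x + tm m *\<^sub>R v'" for m
  proof -
    have tr': "\<And>y. \<phi> (y + inverse (K^m) *\<^sub>R v) = \<phi> y + inverse (K^m) *\<^sub>R v'"
      using frac_shift[OF _ sc tr] K by simp
    show ?thesis
      using int_shift[where \<psi>=\<phi>, OF tr', of x "\<lfloor>K^m * t\<rfloor>"] by (simp add: tm_def)
  qed
  have lim: "tm \<longlonglongrightarrow> t"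
  proof (rule real_tendsto_sandwich)
    show "\<forall>\<^sub>F m in sequentially. t - inverse (K^m) \<le> tm m"
    proof (intro always_eventually allI)
      fix m :: nat
      have Km: "K^m > 0" using K by simp
      have "K^m * t - 1 \<le> of_int \<lfloor>K^m * t\<rfloor>" by linarith
      then have "(K^m * t - 1) * inverse (K^m) \<le> of_int \<lfloor>K^m * t\<rfloor> * inverse (K^m)"
        using Km by (intro mult_right_mono) auto
      moreover have "t - inverse (K^m) = (K^m * t - 1) * inverse (K^m)"
        using K by (simp add: field_simps)
      ultimately show "t - inverse (K^m) \<le> tm m" by (simp add: tm_def)
    qed
    show "\<forall>\<^sub>F m in sequentially. tm m \<le> t"
    proof (intro always_eventually allI)
      fix m :: nat
      have Km: "K^m > 0" using K by simp
      have "of_int \<lfloor>K^m * t\<rfloor> \<le> K^m * t" by linarith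
      then have "of_int \<lfloor>K^m * t\<rfloor> * inverse (K^m) \<le> (K^m * t) * inverse (K^m)"
        using Km by (intro mult_right_mono) auto
      moreover have "(K^m * t) * inverse (K^m) = t" using K by simp
      ultimately show "tm m \<le> t" by (simp add: tm_def)
    qed
    have "(\<lambda>m. t - inverse (K^m)) \<longlonglongrightarrow> t - 0"
      by (intro tendsto_diff tendsto_const LIMSEQ_inverse_realpow_zero K)
    then show "(\<lambda>m. t - inverse (K^m)) \<longlonglongrightarrow> t" by simp
    show "(\<lambda>m. t) \<longlonglongrightarrow> t" by simp
  qed
  have l1: "(\<lambda>m. x + tm m *\<^sub>R v) \<longlonglongrightarrow> x + t *\<^sub>R v"
    by (intro tendsto_add tendsto_scaleR tendsto_const lim)
  have "isCont \<phi> (x + t *\<^sub>R v)" using cont by (simp add: continuous_on_eq_continuous_at)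
  from isCont_tendsto_compose[OF this l1]
  have l2: "(\<lambda>m. \<phi> (x + tm m *\<^sub>R v)) \<longlonglongrightarrow> \<phi> (x + t *\<^sub>R v)" .
  have l3: "(\<lambda>m. \<phi> (x + tm m *\<^sub>R v)) \<longlonglongrightarrow> \<phi> x + t *\<^sub>R v'"
    unfolding eq by (intro tendsto_add tendsto_scaleR tendsto_const lim)
  show ?thesis using LIMSEQ_unique[OF l2 l3] .
qed

lemma sum_shift:
  fixes \<phi> :: "real^'n::finite \<Rightarrow> real^'n"
  assumes sh: "\<And>x t i. \<phi> (x + t *\<^sub>R v i) = \<phi> x + t *\<^sub>R v' i"
  shows "finite S \<Longrightarrow> \<phi> (x + (\<Sum>i\<in>S. q i *\<^sub>R v i)) = \<phi> x + (\<Sum>i\<in>S. q i *\<^sub>R v' i)"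
proof (induction S arbitrary: x rule: finite_induct)
  case empty then show ?case by simp
next
  case (insert a S)
  have "\<phi> (x + (\<Sum>i\<in>insert a S. q i *\<^sub>R v i)) = \<phi> ((x + (\<Sum>i\<in>S. q i *\<^sub>R v i)) + q a *\<^sub>R v a)"
    using insert by (simp add: algebra_simps)
  also have "\<dots> = \<phi> x + (\<Sum>i\<in>S. q i *\<^sub>R v' i) + q a *\<^sub>R v' a" using sh insert by simp
  finally show ?case using insert by (simp add: algebra_simps)
qed

lemma phi_linear:
  fixes \<phi> :: "real^'n::finite \<Rightarrow> real^'n" and B B' :: "real^'n^'n"
  assumes K: "K > 1" and sc: "\<And>x. \<phi> (K *\<^sub>R x) = K *\<^sub>R \<phi> x"
    and tr: "\<And>x i. \<phi> (x + column i B) = \<phi> x + column i B'" and cont: "continuous_on UNIV \<phi>"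
  shows "\<phi> (B *v q) = B' *v q"
proof -
  have z: "\<phi> 0 = 0"
  proof -
    have "\<phi> 0 = K *\<^sub>R \<phi> 0" using sc[of 0] by simp
    then have "(K - 1) *\<^sub>R \<phi> 0 = 0" by (simp add: algebra_simps)
    then show ?thesis using K by simp
  qed
  have sh: "\<And>x t i. \<phi> (x + t *\<^sub>R column i B) = \<phi> x + t *\<^sub>R column i B'"
    by (rule real_shift[OF K sc tr cont])
  have "\<phi> (0 + (\<Sum>i\<in>UNIV. q$i *\<^sub>R column i B)) = \<phi> 0 + (\<Sum>i\<in>UNIV. q$i *\<^sub>R column i B')"
    by (rule sum_shift[OF sh]) simp
  then show ?thesis using z by (simp add: matrix_mult_sum scalar_mult_eq_scaleR)
qed



lemma homog_diff_linear:
  fixes F :: "'a::real_normed_vector \<Rightarrow> 'b::real_normed_vector"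
  assumes hom: "\<And>t y. F (t *\<^sub>R y) = t *\<^sub>R F y" and d: "F differentiable (at 0)"
  shows "linear F"
proof -
  from d obtain L where L: "(F has_derivative L) (at 0)" unfolding differentiable_def by blast
  have "F y = L y" for y
  proof -
    have l1: "((\<lambda>t::real. t *\<^sub>R y) has_derivative (\<lambda>s. s *\<^sub>R y)) (at 0)"
      by (rule bounded_linear.has_derivative[OF bounded_linear_scaleR_left has_derivative_ident])
    have L': "(F has_derivative L) (at ((\<lambda>t::real. t *\<^sub>R y) 0))" using L by simp
    have "((F \<circ> (\<lambda>t::real. t *\<^sub>R y)) has_derivative (L \<circ> (\<lambda>s. s *\<^sub>R y))) (at 0)"
      by (rule diff_chain_at[OF l1 L'])
    moreover have "F \<circ> (\<lambda>t::real. t *\<^sub>R y) = (\<lambda>t. t *\<^sub>R F y)" by (rule ext) (simp add: hom)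
    ultimately have a: "((\<lambda>t::real. t *\<^sub>R F y) has_derivative (L \<circ> (\<lambda>s. s *\<^sub>R y))) (at 0)" by simp
    have b: "((\<lambda>t::real. t *\<^sub>R F y) has_derivative (\<lambda>s. s *\<^sub>R F y)) (at 0)"
      by (rule bounded_linear.has_derivative[OF bounded_linear_scaleR_left has_derivative_ident])
    have "L \<circ> (\<lambda>s. s *\<^sub>R y) = (\<lambda>s. s *\<^sub>R F y)" by (rule has_derivative_unique[OF a b])
    then have "(L \<circ> (\<lambda>s. s *\<^sub>R y)) 1 = 1 *\<^sub>R F y" by simp
    then show ?thesis by simp
  qed
  then have "F = L" by (rule ext)
  moreover have "linear L" using has_derivative_bounded_linear[OF L] bounded_linear.linear by blast
  ultimately show ?thesis by simp
qed

lemma conformal: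
  fixes A :: "real^'n::finite^'n"
  assumes inj: "\<And>y. A *v y = 0 \<Longrightarrow> y = 0"
    and lin: "linear (\<lambda>y. (norm y ^ 2 / norm (A *v y) ^ 2) *\<^sub>R (A *v y))"
  shows "\<exists>T c. orthogonal_matrix T \<and> c > 0 \<and> A = c *\<^sub>R T"
proof -
  define g where "g y = norm y ^ 2 / norm (A *v y) ^ 2" for y
  define F where "F y = g y *\<^sub>R (A *v y)" for y
  have linF: "linear F" using lin unfolding F_def g_def .
  have gpos: "g y > 0" if "y \<noteq> 0" for y
  proof -
    have "A *v y \<noteq> 0" using inj that by blast
    then show ?thesis using that by (simp add: g_def divide_pos_pos)
  qed
  have eqb: "g (axis i 1) = g (axis j 1)" for i j
  proof (cases "i = j")
    case True then show ?thesis by simp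
  next
    case False
    let ?s = "axis i (1::real) + axis j 1"
    have "F ?s = F (axis i 1) + F (axis j 1)" using linF by (simp add: linear_add)
    then have "A *v (g ?s *\<^sub>R ?s) = A *v (g (axis i 1) *\<^sub>R axis i 1 + g (axis j 1) *\<^sub>R axis j 1)"
      by (simp add: F_def matrix_vector_mult_scaleR matrix_vector_right_distrib scaleR_add_right)
    then have "A *v (g ?s *\<^sub>R ?s - (g (axis i 1) *\<^sub>R axis i 1 + g (axis j 1) *\<^sub>R axis j 1)) = 0"
      by (simp add: matrix_vector_mult_diff_distrib)
    then have v0: "g ?s *\<^sub>R ?s - (g (axis i 1) *\<^sub>R axis i 1 + g (axis j 1) *\<^sub>R axis j 1) = 0" by (rule inj)
    have ci: "g ?s = g (axis i 1)" using arg_cong[OF v0, of "\<lambda>v. v $ i"] False by (simp add: axis_def)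
    have cj: "g ?s = g (axis j 1)" using arg_cong[OF v0, of "\<lambda>v. v $ j"] False by (simp add: axis_def)
    show ?thesis using ci cj by simp
  qed
  define l where "l = g (axis undefined 1)"
  have lb: "g (axis i 1) = l" for i unfolding l_def by (rule eqb)
  have Fl: "F y = l *\<^sub>R (A *v y)" for y
  proof -
    have "(\<lambda>y. l *\<^sub>R (A *v y)) = (\<lambda>y. (l *\<^sub>R A) *v y)" by (simp add: scaleR_matrix_vector_assoc)
    then have "linear (\<lambda>y. l *\<^sub>R (A *v y))" by simp
    then have "F = (\<lambda>y. l *\<^sub>R (A *v y))"
    proof (intro linear_eq_stdbasis[OF linF])
      fix b :: "real^'n" assume "b \<in> Basis"
      then obtain i where b: "b = axis i 1" by (auto simp: Basis_vec_def)
      show "F b = l *\<^sub>R (A *v b)" unfolding b F_def lb ..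
    qed
    then show ?thesis by simp
  qed
  have gl: "g y = l" if "y \<noteq> 0" for y
  proof -
    have "g y *\<^sub>R (A *v y) = l *\<^sub>R (A *v y)" using Fl[of y] by (simp add: F_def)
    moreover have "A *v y \<noteq> 0" using inj that by blast
    ultimately show ?thesis by simp
  qed
  have lpos: "l > 0" using gpos[of "axis undefined 1"] by (simp add: l_def)
  define c where "c = sqrt (inverse l)"
  have cpos: "c > 0" using lpos by (simp add: c_def)
  have nA: "norm (A *v y) = c * norm y" for y
  proof (cases "y = 0")
    case True then show ?thesis by simp
  next
    case False
    have "norm y ^ 2 / norm (A *v y) ^ 2 = l" using gl[OF False] by (simp add: g_def)
    moreover have "norm (A *v y) \<noteq> 0" using inj False by auto
    ultimately have "norm (A *v y) ^ 2 = inverse l * norm y ^ 2" using lpos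
      by (simp add: field_simps)
    then have "sqrt (norm (A *v y) ^ 2) = sqrt (inverse l * norm y ^ 2)" by simp
    then show ?thesis by (simp add: c_def real_sqrt_mult)
  qed
  define T where "T = inverse c *\<^sub>R A"
  have nT: "norm (T *v y) = norm y" for y
    using nA[of y] cpos by (simp add: T_def scaleR_matrix_vector_assoc[symmetric])
  have "orthogonal_transformation (\<lambda>y. T *v y)"
    unfolding orthogonal_transformation using nT by simp
  then have oT: "orthogonal_matrix T" by (simp add: orthogonal_transformation_matrix)
  have "A = c *\<^sub>R T" using cpos by (simp add: T_def)
  with oT cpos show ?thesis by blast
qed



lemma column_mult: "column i (A ** B) = A *v column i (B::real^'n::finite^'n)"
  by (simp add: vec_eq_iff column_def matrix_matrix_mult_def matrix_vector_mult_def)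

lemma reverse_dir:
  fixes k :: int and B B' T :: "real^'n::finite^'n"
  assumes T: "orthogonal_matrix T" and c: "c > 0" and B': "B' = (c *\<^sub>R T) ** B"
  shows "smoothly_conjugate k B B'"
proof -
  define A where "A = c *\<^sub>R T"
  define Ai where "Ai = inverse c *\<^sub>R transpose T"
  define h where "h = map_option (\<lambda>x. A *v x)"
  define h' where "h' = map_option (\<lambda>x. Ai *v x)"
  have TT: "transpose T ** T = mat 1" "T ** transpose T = mat 1" using T by (auto simp: orthogonal_matrix_def)
  have e1: "Ai *v (A *v x) = x" for x
  proof -
    have "Ai *v (A *v x) = inverse c *\<^sub>R (transpose T *v (c *\<^sub>R (T *v x)))"
      by (simp add: A_def Ai_def scaleR_matrix_vector_assoc[symmetric])
    also have "\<dots> = (transpose T ** T) *v x" using c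
      by (simp add: matrix_vector_mult_scaleR matrix_vector_mul_assoc)
    finally show ?thesis using TT by simp
  qed
  have e2: "A *v (Ai *v x) = x" for x
  proof -
    have "A *v (Ai *v x) = c *\<^sub>R (T *v (inverse c *\<^sub>R (transpose T *v x)))"
      by (simp add: A_def Ai_def scaleR_matrix_vector_assoc[symmetric])
    also have "\<dots> = T *v (transpose T *v x)" using c
      by (simp add: matrix_vector_mult_scaleR)
    also have "\<dots> = (T ** transpose T) *v x" by (rule matrix_vector_mul_assoc)
    finally show ?thesis using TT by simp
  qed
  have c1: "h' \<circ> h = id" by (rule ext) (simp add: h_def h'_def e1 option.map_comp o_def option.map_ident)
  have c2: "h \<circ> h' = id" by (rule ext) (simp add: h_def h'_def e2 option.map_comp o_def option.map_ident)
  have bij: "bij h" by (rule o_bij[OF c1 c2])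
  have invh: "inv h = h'" by (rule inv_unique_comp[OF c2 c1])
  have s1: "smooth_sphere_map h" unfolding h_def A_def by (rule smooth_lin[OF T c])
  have s2: "smooth_sphere_map h'" unfolding h'_def Ai_def
    by (rule smooth_lin) (use T c in auto)
  have ra: "rho_a k \<circ> h = h \<circ> rho_a k"
  proof
    fix p show "(rho_a k \<circ> h) p = (h \<circ> rho_a k) p"
      by (cases p) (simp_all add: rho_a_def h_def matrix_vector_mult_scaleR)
  qed
  have rb: "rho_b B' i \<circ> h = h \<circ> rho_b B i" for i
  proof
    fix p show "(rho_b B' i \<circ> h) p = (h \<circ> rho_b B i) p"
      by (cases p) (simp_all add: rho_b_def h_def B' A_def column_mult matrix_vector_right_distrib)
  qed
  show ?thesis unfolding smoothly_conjugate_def sphere_diffeo_def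
    using bij invh s1 s2 ra rb by blast
qed

lemma forward_dir:
  fixes k :: int and B B' :: "real^'n::finite^'n"
  assumes k: "k \<ge> 2" and iB: "invertible B" and iB': "invertible B'"
    and sc: "smoothly_conjugate k B B'"
  shows "\<exists>T c. orthogonal_matrix T \<and> c > 0 \<and> B' = (c *\<^sub>R T) ** B"
proof -
  obtain h :: "'n sphere_pt \<Rightarrow> 'n sphere_pt" where hd: "sphere_diffeo h" and ha: "rho_a k \<circ> h = h \<circ> rho_a k"
    and hb: "\<And>i. rho_b B' i \<circ> h = h \<circ> rho_b B i"
    using sc unfolding smoothly_conjugate_def by blast
  have bij: "bij h" and sm: "smooth_sphere_map h" using hd by (auto simp: sphere_diffeo_def)
  have inj: "inj h" using bij by (simp add: bij_def)
  obtain i0 where i0: "column i0 B' \<noteq> 0"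
  proof (rule ccontr)
    assume "\<not> thesis"
    then have "\<forall>i. column i B' = 0" using that by blast
    then have "B' = 0" by (simp add: vec_eq_iff column_def)
    with iB' obtain A' :: "real^'n^'n" where "(0::real^'n^'n) ** A' = mat 1" unfolding invertible_def by blast
    then have "(mat 1 :: real^'n^'n) = 0" by (simp add: matrix_matrix_mult_def vec_eq_iff)
    then have "(mat 1 :: real^'n^'n) $ i0 $ i0 = 0" by simp
    then show False by (simp add: mat_def)
  qed
  have hN: "h None = None"
  proof (rule ccontr)
    assume "h None \<noteq> None"
    then obtain y where y: "h None = Some y" by blast
    have "(rho_b B' i0 \<circ> h) None = (h \<circ> rho_b B i0) None" using hb by simp
    then have "Some (y + column i0 B') = Some y" using y by (simp add: rho_b_def)
    then show False using i0 by simp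
  qed
  define \<phi> where "\<phi> x = the (h (Some x))" for x
  have hS: "h (Some x) = Some (\<phi> x)" for x
  proof -
    have "h (Some x) \<noteq> None" using inj hN by (metis injD option.distinct(1))
    then show ?thesis by (auto simp: \<phi>_def)
  qed
  define K where "K = real_of_int k"
  have K: "K > 1" using k by (simp add: K_def)
  have scl: "\<phi> (K *\<^sub>R x) = K *\<^sub>R \<phi> x" for x
  proof -
    have "(rho_a k \<circ> h) (Some x) = (h \<circ> rho_a k) (Some x)" using ha by simp
    then show ?thesis by (simp add: rho_a_def hS K_def)
  qed
  have trl: "\<phi> (x + column i B) = \<phi> x + column i B'" for x i
  proof -
    have "(rho_b B' i \<circ> h) (Some x) = (h \<circ> rho_b B i) (Some x)" using hb by simp
    then show ?thesis by (simp add: rho_b_def hS)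
  qed
  have "smooth_on (chart False ` (chart_dom False \<inter> h -` chart_dom False)) (chart False \<circ> h \<circ> chart_inv False)"
    using sm unfolding smooth_sphere_map_def by blast
  moreover have "chart False ` (chart_dom False \<inter> h -` chart_dom False) = UNIV"
  proof -
    have "x \<in> chart False ` (chart_dom False \<inter> h -` chart_dom False)" for x
      by (rule image_eqI[of _ _ "Some x"]) (simp_all add: chart_def chart_dom_def hS)
    then show ?thesis by (metis UNIV_eq_I)
  qed
  moreover have "chart False \<circ> h \<circ> chart_inv False = \<phi>"
    by (rule ext) (simp add: chart_def chart_inv_def hS)
  ultimately have "smooth_on UNIV \<phi>" by simp
  then have "iter_dd [] \<phi> differentiable_on UNIV" unfolding smooth_on_def by (metis empty_set empty_subsetI)
  then have cont: "continuous_on UNIV \<phi>" by (simp add: differentiable_imp_continuous_on)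
  have plin: "\<phi> (B *v q) = B' *v q" for q by (rule phi_linear[OF K scl trl cont])
  obtain Bi where Bi: "B ** Bi = mat 1" "Bi ** B = mat 1" using iB unfolding invertible_def by blast
  define A where "A = B' ** Bi"
  have phiA: "\<phi> y = A *v y" for y
  proof -
    have "\<phi> y = \<phi> (B *v (Bi *v y))" by (simp add: matrix_vector_mul_assoc Bi)
    also have "\<dots> = A *v y" using plin[of "Bi *v y"] by (simp only: A_def matrix_vector_mul_assoc)
    finally show ?thesis .
  qed
  have Ainj: "y = 0" if "A *v y = 0" for y
  proof -
    have "h (Some y) = h (Some 0)" using that by (simp add: hS phiA)
    then show ?thesis using inj by (metis injD option.inject)
  qed
  define G where "G y = (norm y ^ 2 / norm (A *v y) ^ 2) *\<^sub>R (A *v y)" for y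
  have FG: "(chart True \<circ> h \<circ> chart_inv True) = G"
  proof
    fix y :: "real^'n"
    show "(chart True \<circ> h \<circ> chart_inv True) y = G y"
    proof (cases "y = 0")
      case True then show ?thesis by (simp add: chart_def chart_inv_def hN G_def)
    next
      case False
      have Ay: "A *v y \<noteq> 0" using Ainj False by blast
      have ny: "norm y \<noteq> 0" using False by simp
      have nAy: "norm (A *v y) \<noteq> 0" using Ay by simp
      have "(chart True \<circ> h \<circ> chart_inv True) y
          = inverse (norm (A *v (inverse (norm y ^ 2) *\<^sub>R y)) ^ 2) *\<^sub>R (A *v (inverse (norm y ^ 2) *\<^sub>R y))"
        using False by (simp add: chart_def chart_inv_def hS phiA)
      also have "\<dots> = (inverse ((inverse (norm y ^ 2)) ^ 2 * norm (A *v y) ^ 2) * inverse (norm y ^ 2)) *\<^sub>R (A *v y)"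
        by (simp add: matrix_vector_mult_scaleR power_mult_distrib)
      also have "inverse ((inverse (norm y ^ 2)) ^ 2 * norm (A *v y) ^ 2) * inverse (norm y ^ 2) = norm y ^ 2 / norm (A *v y) ^ 2"
        using ny nAy by (simp add: field_simps power2_eq_square)
      finally show ?thesis by (simp add: G_def)
    qed
  qed
  have "smooth_on (chart True ` (chart_dom True \<inter> h -` chart_dom True)) (chart True \<circ> h \<circ> chart_inv True)"
    using sm unfolding smooth_sphere_map_def by blast
  then have op: "open (chart True ` (chart_dom True \<inter> h -` chart_dom True))"
    and dG: "G differentiable_on (chart True ` (chart_dom True \<inter> h -` chart_dom True))"
    unfolding smooth_on_def FG by (auto dest: spec[of _ "[]"])
  have "0 \<in> chart True ` (chart_dom True \<inter> h -` chart_dom True)"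
    by (rule image_eqI[of _ _ None]) (simp_all add: chart_def chart_dom_def hN)
  then have dG0: "G differentiable (at 0)" using dG op differentiable_on_eq_differentiable_at by blast
  have hom: "G (t *\<^sub>R y) = t *\<^sub>R G y" for t y
  proof (cases "t = 0")
    case True then show ?thesis by (simp add: G_def)
  next
    case False
    have "G (t *\<^sub>R y) = ((t^2 * norm y ^ 2) / (t^2 * norm (A *v y) ^ 2)) *\<^sub>R (t *\<^sub>R (A *v y))"
      by (simp add: G_def matrix_vector_mult_scaleR power_mult_distrib)
    also have "(t^2 * norm y ^ 2) / (t^2 * norm (A *v y) ^ 2) = norm y ^ 2 / norm (A *v y) ^ 2"
      using False by simp
    finally show ?thesis by (simp add: G_def)
  qed
  have "linear G" by (rule homog_diff_linear[OF hom dG0])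
  then obtain T c where Tc: "orthogonal_matrix T" "c > 0" "A = c *\<^sub>R T"
    using conformal[OF Ainj] unfolding G_def by blast
  have "B' = A ** B" by (simp add: A_def matrix_mul_assoc[symmetric] Bi)
  with Tc show ?thesis by blast
qed


theorem proposition3p1:
  fixes k :: int and B B' :: "real^'n::finite^'n"
  assumes "k \<ge> 2" and "invertible B" and "invertible B'"
  shows "smoothly_conjugate k B B' \<longleftrightarrow>
    (\<exists>T c. orthogonal_matrix T \<and> c > 0 \<and> B' = (c *\<^sub>R T) ** B)"
proof
  assume "smoothly_conjugate k B B'"
  then show "\<exists>T c. orthogonal_matrix T \<and> c > 0 \<and> B' = (c *\<^sub>R T) ** B"
    using forward_dir assms by blast
next
  assume "\<exists>T c. orthogonal_matrix T \<and> c > 0 \<and> B' = (c *\<^sub>R T) ** B"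
  then obtain T c where "orthogonal_matrix T" "c > 0" "B' = (c *\<^sub>R T) ** B" by blast
  then show "smoothly_conjugate k B B'" by (rule reverse_dir)
qed

end
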